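(* Let $1 \leq k \leq n-1$ and let $\mathcal{E}_1,\ldots,\mathcal{E}_k$ be ellipsoids in $\mathbb{R}^n$. Define the body $L$ by $\rho_L = \rho_{\mathcal{E}_1}\cdots\rho_{\mathcal{E}_k}$, and let $k \leq l \leq n-1$. Then there exists a sequence of star-bodies $\{L_i\}$ which tends to $L$ in the radial metric and such that for each $i$, $\rho_{L_i} = \rho_{\mathcal{E}^i_1}^{l} + \ldots + \rho_{\mathcal{E}^i_{m_i}}^{l}$ for some ellipsoids $\mathcal{E}^i_1,\ldots,\mathcal{E}^i_{m_i}$.
   Context: Ellipsoids are centered at the origin (images of the Euclidean unit ball under full-rank linear maps). For a star-body $K$ (centrally-symmetric, with continuous positive radial function), $\rho_K(\theta) = \max\{r>0: r\theta\in K\}$ for $\theta \in S^{n-1}$. The radial metric is $d_r(K_1,K_2)=\sup_{\theta\in S^{n-1}}|\rho_{K_1}(\theta)-\rho_{K_2}(\theta)|$. *)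

theory Defs
  imports "HOL-Analysis.Analysis"
begin

definition is_ellipsoid :: "'a::euclidean_space set \<Rightarrow> bool" where
  "is_ellipsoid E \<longleftrightarrow> (\<exists>f::'a \<Rightarrow> 'a. linear f \<and> inj f \<and> E = f ` cball 0 1)"

definition radial :: "'a::euclidean_space set \<Rightarrow> 'a \<Rightarrow> real" where
  "radial K \<theta> = Sup {r. r > 0 \<and> r *\<^sub>R \<theta> \<in> K}"

definition star_body :: "'a::euclidean_space set \<Rightarrow> bool" where
  "star_body K \<longleftrightarrow> compact K
     \<and> (\<forall>x\<in>K. \<forall>t\<in>{0..1}. t *\<^sub>R x \<in> K)
     \<and> (\<forall>x\<in>K. - x \<in> K)
     \<and> continuous_on (sphere 0 1) (radial K)
     \<and> (\<forall>\<theta>\<in>sphere 0 1. radial K \<theta> > 0)"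

definition body_of_radial :: "('a::euclidean_space \<Rightarrow> real) \<Rightarrow> 'a set" where
  "body_of_radial \<rho> = {x. x = 0 \<or> norm x \<le> \<rho> (x /\<^sub>R norm x)}"

definition radial_dist :: "'a::euclidean_space set \<Rightarrow> 'a set \<Rightarrow> real" where
  "radial_dist K1 K2 = (SUP \<theta>\<in>sphere 0 1. \<bar>radial K1 \<theta> - radial K2 \<theta>\<bar>)"

end

theory Submission
  imports Defs
begin


lemma onepsq: "1 + (w::real)\<^sup>2 > 0" "1 + (w::real)\<^sup>2 \<noteq> 0"
  by (smt (verit) zero_le_power2)+

lemma fpow_cont: "continuous_on S (\<lambda>w::real. (1+w\<^sup>2) powr (-s))"
  by (intro continuous_intros) (auto simp: onepsq)

lemma fpow_pos: "(1+w\<^sup>2) powr (-s) > (0::real)"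
  by (simp add: onepsq)

lemma fpow_le: assumes "s \<ge> 1" shows "(1+w\<^sup>2) powr (-s) \<le> inverse (1 + (w::real)\<^sup>2)"
proof -
  have "(1+w\<^sup>2) powr (-s) \<le> (1+w\<^sup>2) powr (-1)"
    by (rule powr_mono) (use assms in auto)
  also have "\<dots> = inverse (1+w\<^sup>2)" by (simp add: powr_minus add_pos_nonneg)
  finally show ?thesis .
qed

lemma fpow_antimono: assumes "s \<ge> 0" "0 \<le> x" "x \<le> y"
  shows "(1+y\<^sup>2) powr (-s) \<le> (1+(x::real)\<^sup>2) powr (-s)"
proof -
  have "x\<^sup>2 \<le> y\<^sup>2" using assms by (simp add: power_mono)
  then show ?thesis using assms
    by (intro powr_mono2') (auto simp: add_pos_nonneg)
qed

lemma Phi_le_arctan: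
  assumes "s \<ge> 1" "T \<ge> 0"
  shows "integral {0..T} (\<lambda>w::real. (1+w\<^sup>2) powr (-s)) \<le> arctan T"
proof -
  have "((\<lambda>w. inverse (1+w\<^sup>2)) has_integral (arctan T - arctan 0)) {0..T}"
    by (rule fundamental_theorem_of_calculus)
       (use assms in \<open>auto intro!: derivative_eq_intros simp: has_real_derivative_iff_has_vector_derivative[symmetric]\<close>)
  then have "integral {0..T} (\<lambda>w::real. (1+w\<^sup>2) powr (-s)) \<le> arctan T - arctan 0"
    by (intro has_integral_le[OF integrable_integral]) 
       (auto intro!: integrable_continuous_interval fpow_cont fpow_le assms)
  then show ?thesis by simp
qed


lemma scale_integral:
  fixes x c n s :: real
  assumes "x > 0" "c > 0" "n \<ge> 0"
  shows "integral {0..n} (\<lambda>v. (x\<^sup>2 + (x * c * v)\<^sup>2) powr (-s))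
       = x powr (-2 * s) / c * integral {0..c * n} (\<lambda>w. (1+w\<^sup>2) powr (-s))"
proof -
  have x2: "(x\<^sup>2) powr (-s) = x powr (-2 * s)"
  proof -
    have "x\<^sup>2 = x powr 2" using assms by (simp add: powr_realpow)
    then show ?thesis by (simp add: powr_powr)
  qed
  have eq: "(x\<^sup>2 + (x * c * v)\<^sup>2) powr (-s) = x powr (-2 * s) * (1+(c * v)\<^sup>2) powr (-s)" for v
  proof -
    have "x\<^sup>2 + (x * c * v)\<^sup>2 = x\<^sup>2 * (1+(c * v)\<^sup>2)" by (simp add: algebra_simps power_mult_distrib)
    then have "(x\<^sup>2 + (x * c * v)\<^sup>2) powr (-s) = (x\<^sup>2) powr (-s) * (1+(c * v)\<^sup>2) powr (-s)"
      using onepsq(1)[of "c * v"] by (simp add: powr_mult)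
    then show ?thesis using x2 by simp
  qed
  have img: "(\<lambda>v. v / c) ` {0..c * n} = {0..n}" using assms by simp
  have "integral {0..n} (\<lambda>v. (1+(c * v)\<^sup>2) powr (-s)) = 1 / c * integral {0..c * n} (\<lambda>w. (1+w\<^sup>2) powr (-s))"
    using integral_stretch_real[of c 0 "c * n" "\<lambda>w. (1+w\<^sup>2) powr (-s)"] assms img by simp
  then show ?thesis unfolding eq by simp
qed

lemma scalar_approx:
  fixes p :: nat and m R \<epsilon> :: real
  assumes p: "p \<ge> 1" and m: "0 < m" "m \<le> R" and e: "\<epsilon> > 0"
  shows "\<exists>\<delta> C n. \<delta> > 0 \<and> C > 0 \<and> (\<forall>x y. m \<le> x \<longrightarrow> x \<le> R \<longrightarrow> m \<le> y \<longrightarrow> y \<le> R \<longrightarrow>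
     \<bar>1/(x^p * y) - (\<Sum>k\<le>n. (\<delta>/C) * (x\<^sup>2 + (y * \<delta> * real k)\<^sup>2) powr (-(real p+1)/2))\<bar> \<le> \<epsilon>)"
proof -
  define s where "s = (real p + 1)/2"
  have s1: "s \<ge> 1" using p by (simp add: s_def)
  define f where "f w = (1+w\<^sup>2) powr (-s)" for w :: real
  define \<Phi> where "\<Phi> T = integral {0..T} f" for T
  have fcont: "continuous_on S f" for S unfolding f_def by (rule fpow_cont)
  have fpos: "f w > 0" for w unfolding f_def by (rule fpow_pos)
  have fint: "f integrable_on {a..b}" for a b by (intro integrable_continuous_interval fcont)
  have \<Phi>mono: "\<Phi> a \<le> \<Phi> b" if "0 \<le> a" "a \<le> b" for a b
    unfolding \<Phi>_def using that fpos
    by (intro integral_subset_le fint) (auto simp: less_imp_le)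
  have \<Phi>bd: "\<Phi> T \<le> pi/2" if "T \<ge> 0" for T
  proof -
    have "\<Phi> T \<le> arctan T" unfolding \<Phi>_def f_def by (rule Phi_le_arctan[OF s1 that])
    also have "\<dots> \<le> pi/2" using arctan_ubound[of T] by simp
    finally show ?thesis .
  qed
  define C where "C = (SUP T\<in>{0..}. \<Phi> T)"
  have bdd: "bdd_above (\<Phi> ` {0..})" using \<Phi>bd by (intro bdd_aboveI[of _ "pi/2"]) auto
  have \<Phi>C: "\<Phi> T \<le> C" if "T \<ge> 0" for T unfolding C_def using that bdd by (intro cSUP_upper) auto
  have "\<Phi> 1 \<ge> integral {0..1} (\<lambda>_::real. f 1)"
    unfolding \<Phi>_def
  proof (rule Henstock_Kurzweil_Integration.integral_le)
    show "(\<lambda>_::real. f 1) integrable_on {0..1}" by (rule integrable_continuous_interval) (rule continuous_on_const)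
    show "f integrable_on {0..1}" by (rule fint)
    fix w :: real assume "w \<in> {0..1}"
    then show "f 1 \<le> f w" unfolding f_def using s1 by (intro fpow_antimono) auto
  qed
  then have "\<Phi> 1 > 0" using fpos[of 1] by simp
  then have Cpos: "C > 0" using \<Phi>C[of 1] by simp
  define \<eta> where "\<eta> = \<epsilon> * C * m^(p+1) / 2"
  have \<eta>pos: "\<eta> > 0" unfolding \<eta>_def using Cpos m e by simp
  have "C - \<eta> < (SUP T\<in>{0..}. \<Phi> T)" using \<eta>pos unfolding C_def[symmetric] by simp
  then obtain T0 where T0: "T0 \<ge> 0" "C - \<eta> < \<Phi> T0"
    using less_cSUP_iff[OF _ bdd] by auto
  define \<delta> where "\<delta> = \<eta>"
  define n where "n = nat \<lceil>T0 * R / (m * \<delta>)\<rceil>"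
  have nge: "real n \<ge> T0 * R / (m * \<delta>)" unfolding n_def by linarith
  show ?thesis
  proof (intro exI conjI allI impI)
    show "\<delta> > 0" "C > 0" using \<eta>pos Cpos by (auto simp: \<delta>_def)
    fix x y assume xy: "m \<le> x" "x \<le> R" "m \<le> y" "y \<le> R"
    have xpos: "x > 0" and ypos: "y > 0" using xy m by auto
    define c where "c = y * \<delta> / x"
    have cpos: "c > 0" using xpos ypos \<eta>pos by (simp add: c_def \<delta>_def)
    define g where "g v = (x\<^sup>2 + (x * c * v)\<^sup>2) powr (-s)" for v
    have gk: "(x\<^sup>2 + (y * \<delta> * real k)\<^sup>2) powr (-(real p+1)/2) = g (real k)" for k
    proof -
      have ex: "-(real p+1)/2 = -s" by (simp add: s_def field_simps)
      show ?thesis unfolding ex g_def c_def using xpos by simp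
    qed
    have pos2: "x\<^sup>2 + (x * c * v)\<^sup>2 > 0" for v using xpos by (simp add: add_pos_nonneg)
    interpret A: antimono_fun_sum_integral_diff g
    proof
      show "g v \<le> g u" if "0 \<le> u" "u \<le> v" for u v
      proof -
        have "(x * c * u)\<^sup>2 \<le> (x * c * v)\<^sup>2" using that xpos cpos
          by (intro power_mono) (auto intro!: mult_left_mono mult_nonneg_nonneg)
        then show ?thesis unfolding g_def using s1 pos2[of u]
          by (intro powr_mono2') auto
      qed
      show "g v \<ge> 0" for v unfolding g_def by simp
      show "continuous_on {0..} g" unfolding g_def using pos2
        by (intro continuous_intros) (auto simp: order.strict_iff_not)
    qed
    define D where "D = A.sum_integral_diff_series n"
    have D0: "D \<ge> 0" unfolding D_def by (rule A.sum_integral_diff_series_nonneg)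
    have "D \<le> A.sum_integral_diff_series 0" unfolding D_def by (rule A.sum_integral_diff_series_antimono) simp
    then have D1: "D \<le> g 0" by (simp add: A.sum_integral_diff_series_def)
    have xp: "x powr (-2 * s) = 1 / x^(p+1)"
    proof -
      have ex: "-2 * s = - real (p+1)" by (simp add: s_def field_simps)
      have "x powr (-2 * s) = inverse (x powr (real (p+1)))"
        unfolding ex by (rule powr_minus)
      also have "\<dots> = inverse (x^(p+1))" by (subst powr_realpow[OF xpos]) (rule refl)
      finally show ?thesis by (simp only: inverse_eq_divide)
    qed
    have g0: "g 0 = 1 / x^(p+1)"
    proof -
      have "g 0 = (x\<^sup>2) powr (-s)" by (simp add: g_def)
      also have "x\<^sup>2 = x powr 2" using xpos by (simp add: powr_realpow)
      finally show ?thesis using xp by (simp add: powr_powr)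
    qed
    have int: "integral {0..real n} g = 1 / x^(p+1) / c * \<Phi> (c * real n)"
      unfolding g_def \<Phi>_def f_def using scale_integral[OF xpos cpos, of "real n" s] xp by simp
    define A where "A = 1 / (x^p * y)"
    have Apos: "A > 0" using xpos ypos by (simp add: A_def)
    have Ale: "A \<le> 1 / m^(p+1)"
    proof -
      have "m^p \<le> x^p" using xy m by (intro power_mono) auto
      then have "m^p * m \<le> x^p * y" using xy m by (intro mult_mono) auto
      then have "m^(p+1) \<le> x^p * y" by (simp add: mult.commute)
      then show ?thesis unfolding A_def using m xpos ypos by (intro divide_left_mono) (auto intro!: mult_pos_pos)
    qed
    have gle: "g 0 \<le> 1 / m^(p+1)" unfolding g0 using xy m xpos
      by (intro divide_left_mono power_mono) (auto intro!: mult_pos_pos)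
    have sumeq: "(\<Sum>k\<le>n. (\<delta>/C) * g (real k)) = (\<delta>/C) * (integral {0..real n} g + D)"
      by (simp add: D_def A.sum_integral_diff_series_def sum_distrib_left)
    have int2: "(\<delta>/C) * integral {0..real n} g = A * \<Phi> (c * real n) / C"
      unfolding int A_def c_def using xpos ypos \<eta>pos by (simp add: \<delta>_def field_simps)
    have cn: "c * real n \<ge> T0"
    proof -
      have "y * \<delta> / x \<ge> m * \<delta> / R" using xy m \<eta>pos unfolding \<delta>_def
        by (intro frac_le mult_right_mono) auto
      then have "c * real n \<ge> (m * \<delta> / R) * real n" unfolding c_def by (intro mult_right_mono) auto
      moreover have "(m * \<delta> / R) * real n \<ge> (m * \<delta> / R) * (T0 * R / (m * \<delta>))"
        using nge m \<eta>pos unfolding \<delta>_def by (intro mult_left_mono) auto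
      moreover have "(m * \<delta> / R) * (T0 * R / (m * \<delta>)) = T0" using m \<eta>pos unfolding \<delta>_def by simp
      ultimately show ?thesis by linarith
    qed
    have \<Phi>1: "\<Phi> (c * real n) \<le> C" using cn T0 by (intro \<Phi>C) simp
    have \<Phi>2: "\<Phi> (c * real n) > C - \<eta>" using \<Phi>mono[OF T0(1) cn] T0 by simp
    have t1: "A * (C - \<Phi> (c * real n)) / C \<le> \<epsilon>/2"
    proof -
      have "A * (C - \<Phi> (c * real n)) \<le> (1 / m^(p+1)) * \<eta>"
        using Ale \<Phi>1 \<Phi>2 Apos m by (intro mult_mono) auto
      also have "\<dots> = \<epsilon> * C / 2" unfolding \<eta>_def using m by simp
      finally show ?thesis using Cpos by (simp add: divide_simps)
    qed
    have t1': "A * (C - \<Phi> (c * real n)) / C \<ge> 0" using Apos \<Phi>1 Cpos by simp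
    have t2: "\<delta> * D / C \<le> \<epsilon>/2"
    proof -
      have "\<delta> * D \<le> \<eta> * (1 / m^(p+1))" unfolding \<delta>_def using D1 gle \<eta>pos m
        by (intro mult_left_mono) auto
      also have "\<dots> = \<epsilon> * C / 2" unfolding \<eta>_def using m by simp
      finally show ?thesis using Cpos by (simp add: divide_simps)
    qed
    have t2': "\<delta> * D / C \<ge> 0" using D0 \<eta>pos Cpos by (simp add: \<delta>_def)
    have "1/(x^p * y) - (\<Sum>k\<le>n. (\<delta>/C) * g (real k)) = A * (C - \<Phi> (c * real n)) / C - \<delta> * D / C"
      unfolding sumeq distrib_left int2 using Cpos xpos ypos by (simp add: A_def field_simps)
    then show "\<bar>1/(x^p * y) - (\<Sum>k\<le>n. (\<delta>/C) * (x\<^sup>2 + (y * \<delta> * real k)\<^sup>2) powr (-(real p+1)/2))\<bar> \<le> \<epsilon>"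
      unfolding gk using t1 t1' t2 t2' by linarith
  qed
qed

lemma sum_concat: "(\<Sum>j<(a::nat)+(b::nat). (if j<a then f j else g (j-a))) = (\<Sum>j<a. f j) + (\<Sum>j<b. (g j :: real))"
  by (induction b) auto

definition good :: "nat \<Rightarrow> ('a::euclidean_space \<Rightarrow> real) \<Rightarrow> bool" where
  "good p F \<longleftrightarrow> (\<forall>\<epsilon>>0. \<exists>m (H::nat \<Rightarrow> 'a \<Rightarrow> 'a). m \<ge> 1 \<and> (\<forall>j<m. linear (H j) \<and> inj (H j)) \<and>
      (\<forall>\<theta>\<in>sphere 0 1. \<bar>F \<theta> - (\<Sum>j<m. 1 / norm (H j \<theta>) ^ p)\<bar> \<le> \<epsilon>))"

lemma good_approx:
  fixes F :: "'a::euclidean_space \<Rightarrow> real"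
  assumes "\<And>\<epsilon>. \<epsilon> > 0 \<Longrightarrow> \<exists>G. good p G \<and> (\<forall>\<theta>\<in>sphere 0 1. \<bar>F \<theta> - G \<theta>\<bar> \<le> \<epsilon>)"
  shows "good p F"
  unfolding good_def
proof (intro allI impI)
  fix \<epsilon> :: real assume e: "\<epsilon> > 0"
  obtain G where G: "good p G" "\<forall>\<theta>\<in>sphere 0 1. \<bar>F \<theta> - G \<theta>\<bar> \<le> \<epsilon>/2" using assms[of "\<epsilon>/2"] e by auto
  obtain m and H :: "nat \<Rightarrow> 'a \<Rightarrow> 'a" where mH: "m \<ge> 1" "\<forall>j<m. linear (H j) \<and> inj (H j)"
     "\<forall>\<theta>\<in>sphere 0 1. \<bar>G \<theta> - (\<Sum>j<m. 1 / norm (H j \<theta>) ^ p)\<bar> \<le> \<epsilon>/2"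
  proof -
    have "\<epsilon>/2 > 0" using e by simp
    from G(1)[unfolded good_def, rule_format, OF this] show ?thesis using that by blast
  qed
  show "\<exists>m (H::nat \<Rightarrow> 'a \<Rightarrow> 'a). m \<ge> 1 \<and> (\<forall>j<m. linear (H j) \<and> inj (H j)) \<and>
      (\<forall>\<theta>\<in>sphere 0 1. \<bar>F \<theta> - (\<Sum>j<m. 1 / norm (H j \<theta>) ^ p)\<bar> \<le> \<epsilon>)"
  proof (rule exI[of _ m], rule exI[of _ H], intro conjI ballI)
    fix \<theta> :: 'a assume "\<theta> \<in> sphere 0 1"
    then have "\<bar>F \<theta> - G \<theta>\<bar> \<le> \<epsilon>/2" "\<bar>G \<theta> - (\<Sum>j<m. 1 / norm (H j \<theta>) ^ p)\<bar> \<le> \<epsilon>/2"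
      using G(2) mH(3) by auto
    then show "\<bar>F \<theta> - (\<Sum>j<m. 1 / norm (H j \<theta>) ^ p)\<bar> \<le> \<epsilon>" by linarith
  qed (use mH in auto)
qed

lemma good_add:
  fixes F G :: "'a::euclidean_space \<Rightarrow> real"
  assumes "good p F" "good p G"
  shows "good p (\<lambda>\<theta>. F \<theta> + G \<theta>)"
  unfolding good_def
proof (intro allI impI)
  fix \<epsilon> :: real assume e: "\<epsilon> > 0"
  obtain m1 and H1 :: "nat \<Rightarrow> 'a \<Rightarrow> 'a" where 1: "m1 \<ge> 1" "\<forall>j<m1. linear (H1 j) \<and> inj (H1 j)"
     "\<forall>\<theta>\<in>sphere 0 1. \<bar>F \<theta> - (\<Sum>j<m1. 1 / norm (H1 j \<theta>) ^ p)\<bar> \<le> \<epsilon>/2"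
  proof -
    have "\<epsilon>/2 > 0" using e by simp
    from assms(1)[unfolded good_def, rule_format, OF this] show ?thesis using that by blast
  qed
  obtain m2 and H2 :: "nat \<Rightarrow> 'a \<Rightarrow> 'a" where 2: "m2 \<ge> 1" "\<forall>j<m2. linear (H2 j) \<and> inj (H2 j)"
     "\<forall>\<theta>\<in>sphere 0 1. \<bar>G \<theta> - (\<Sum>j<m2. 1 / norm (H2 j \<theta>) ^ p)\<bar> \<le> \<epsilon>/2"
  proof -
    have "\<epsilon>/2 > 0" using e by simp
    from assms(2)[unfolded good_def, rule_format, OF this] show ?thesis using that by blast
  qed
  define H where "H j = (if j < m1 then H1 j else H2 (j - m1))" for j
  have sH: "(\<Sum>j<m1+m2. 1 / norm (H j \<theta>) ^ p) = (\<Sum>j<m1. 1 / norm (H1 j \<theta>) ^ p) + (\<Sum>j<m2. 1 / norm (H2 j \<theta>) ^ p)" for \<theta>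
  proof -
    have "(\<Sum>j<m1+m2. 1 / norm (H j \<theta>) ^ p) = (\<Sum>j<m1+m2. if j < m1 then 1 / norm (H1 j \<theta>) ^ p else 1 / norm (H2 (j-m1) \<theta>) ^ p)"
      by (rule sum.cong) (auto simp: H_def)
    also have "\<dots> = (\<Sum>j<m1. 1 / norm (H1 j \<theta>) ^ p) + (\<Sum>j<m2. 1 / norm (H2 j \<theta>) ^ p)"
      by (rule sum_concat)
    finally show ?thesis .
  qed
  show "\<exists>m (H::nat \<Rightarrow> 'a \<Rightarrow> 'a). m \<ge> 1 \<and> (\<forall>j<m. linear (H j) \<and> inj (H j)) \<and>
      (\<forall>\<theta>\<in>sphere 0 1. \<bar>F \<theta> + G \<theta> - (\<Sum>j<m. 1 / norm (H j \<theta>) ^ p)\<bar> \<le> \<epsilon>)"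
  proof (rule exI[of _ "m1+m2"], rule exI[of _ H], intro conjI ballI allI impI)
    show "m1 + m2 \<ge> 1" using 1 by simp
  next
    fix j assume "j < m1 + m2" then show "linear (H j)" using 1 2 by (auto simp: H_def)
  next
    fix j assume "j < m1 + m2" then show "inj (H j)" using 1 2 by (auto simp: H_def)
  next
    fix \<theta> :: 'a assume t: "\<theta> \<in> sphere 0 1"
    show "\<bar>F \<theta> + G \<theta> - (\<Sum>j<m1+m2. 1 / norm (H j \<theta>) ^ p)\<bar> \<le> \<epsilon>"
    proof -
      have "\<bar>F \<theta> - (\<Sum>j<m1. 1 / norm (H1 j \<theta>) ^ p)\<bar> \<le> \<epsilon>/2" "\<bar>G \<theta> - (\<Sum>j<m2. 1 / norm (H2 j \<theta>) ^ p)\<bar> \<le> \<epsilon>/2"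
        using 1(3) 2(3) t by auto
      then show ?thesis unfolding sH by linarith
    qed
  qed
qed

lemma good_sum:
  assumes "finite I" "I \<noteq> {}" "\<And>i. i \<in> I \<Longrightarrow> good p (\<phi> i)"
  shows "good p (\<lambda>\<theta>. \<Sum>i\<in>I. \<phi> i \<theta>)"
  using assms
proof (induction I rule: finite_ne_induct)
  case (singleton x) then show ?case by simp
next
  case (insert x F) then show ?case by (simp add: good_add)
qed

lemma lin_bounds:
  fixes h :: "'a::euclidean_space \<Rightarrow> 'a"
  assumes "linear h" "inj h"
  shows "\<exists>a b. 0 < a \<and> a \<le> b \<and> (\<forall>\<theta>\<in>sphere 0 1. a \<le> norm (h \<theta>) \<and> norm (h \<theta>) \<le> b)"
proof -
  obtain a where a: "a > 0" "\<And>x. a * norm x \<le> norm (h x)" using linear_inj_bounded_below_pos[OF assms] by blast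
  obtain B where B: "\<And>x. norm (h x) \<le> B * norm x" using linear_bounded[OF assms(1)] by blast
  show ?thesis
  proof (rule exI[of _ a], rule exI[of _ "max a B"], intro conjI ballI)
    fix \<theta> :: 'a assume "\<theta> \<in> sphere 0 1"
    then have n1: "norm \<theta> = 1" by simp
    show "a \<le> norm (h \<theta>)" using a(2)[of \<theta>] n1 by simp
    show "norm (h \<theta>) \<le> max a B" using B[of \<theta>] n1 by simp
  qed (use a in auto)
qed

lemma quad_comb:
  fixes h g :: "'a::euclidean_space \<Rightarrow> 'a"
  assumes h: "linear h" "inj h" and g: "linear g" and \<alpha>: "\<alpha> > 0" and \<beta>: "\<beta> \<ge> 0"
  shows "\<exists>h'::'a\<Rightarrow>'a. linear h' \<and> inj h' \<and> (\<forall>x. norm (h' x) = sqrt (\<alpha> * (norm (h x))\<^sup>2 + \<beta> * (norm (g x))\<^sup>2))"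
proof -
  define P where "P x = (sqrt \<alpha> *\<^sub>R h x, sqrt \<beta> *\<^sub>R g x)" for x
  have linP: "linear P" unfolding P_def
    by (rule linearI) (auto simp: linear_add[OF h(1)] linear_add[OF g] linear_scale[OF h(1)] linear_scale[OF g] scaleR_add_right)
  have nP: "norm (P x) = sqrt (\<alpha> * (norm (h x))\<^sup>2 + \<beta> * (norm (g x))\<^sup>2)" for x
    unfolding P_def norm_Pair using \<alpha> \<beta> by (simp add: power_mult_distrib)
  have injP: "inj P"
  proof (rule injI)
    fix x y assume "P x = P y"
    then have "sqrt \<alpha> *\<^sub>R h x = sqrt \<alpha> *\<^sub>R h y" unfolding P_def by simp
    then have "h x = h y" using \<alpha> by simp
    then show "x = y" using h(2) by (simp add: inj_eq)
  qed
  have sub: "subspace (range P)" using linP by (simp add: subspace_UNIV linear_subspace_image)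
  have "dim (range P) = dim (UNIV :: 'a set)"
    using linP injP by (intro dim_image_eq) (auto intro: inj_on_subset)
  then obtain f where f: "linear f" "f ` range P = (UNIV :: 'a set)" "\<And>z. z \<in> range P \<Longrightarrow> norm (f z) = norm z"
    using isometry_subspaces[OF sub subspace_UNIV] by metis
  show ?thesis
  proof (rule exI[of _ "f \<circ> P"], intro conjI allI)
    show "linear (f \<circ> P)" using f(1) linP by (rule linear_compose[rotated])
    show "norm ((f \<circ> P) x) = sqrt (\<alpha> * (norm (h x))\<^sup>2 + \<beta> * (norm (g x))\<^sup>2)" for x
      using f(3)[of "P x"] nP by simp
    show "inj (f \<circ> P)"
    proof (rule injI)
      fix x y assume "(f \<circ> P) x = (f \<circ> P) y"
      then have "f (P x - P y) = 0" using f(1) by (simp add: linear_diff)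
      moreover have "P x - P y \<in> range P" using linP by (metis linear_diff rangeI)
      ultimately have "P x - P y = 0" using f(3) by fastforce
      then show "x = y" using injP by (simp add: inj_eq)
    qed
  qed
qed

lemma key_id:
  fixes \<alpha> C \<delta> Q :: real
  assumes a: "\<alpha> = (C/\<delta>) powr (2/(real p+1))" and C: "C > 0" and d: "\<delta> > 0" and Q: "Q > 0"
  shows "1 / sqrt (\<alpha>*Q)^(p+1) = (\<delta>/C) * Q powr (-(real p+1)/2)"
proof -
  define e where "e = (real p + 1)/2"
  have epos: "e > 0" by (simp add: e_def)
  have apos: "\<alpha> > 0" using a C d by simp
  have "sqrt (\<alpha>*Q) = (\<alpha>*Q) powr (1/2)" using apos Q by (simp add: powr_half_sqrt)
  moreover have "((\<alpha>*Q) powr (1/2)) powr (real (p+1)) = ((\<alpha>*Q) powr (1/2))^(p+1)"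
    by (rule powr_realpow) (use apos Q in simp)
  ultimately have "sqrt (\<alpha>*Q)^(p+1) = ((\<alpha>*Q) powr (1/2)) powr (real (p+1))"
    by simp
  also have "\<dots> = (\<alpha>*Q) powr e" by (simp add: powr_powr e_def add.commute)
  also have "\<dots> = \<alpha> powr e * Q powr e" using apos Q by (simp add: powr_mult)
  also have "\<alpha> powr e = C/\<delta>"
  proof -
    have "\<alpha> powr e = (C/\<delta>) powr (2/(real p+1) * e)" unfolding a by (simp add: powr_powr)
    also have "2/(real p+1) * e = 1" by (simp add: e_def)
    finally show ?thesis using C d by simp
  qed
  finally have "sqrt (\<alpha>*Q)^(p+1) = C/\<delta> * Q powr e" .
  moreover have "Q powr (-(real p+1)/2) = inverse (Q powr e)"
  proof -
    have "-(real p+1)/2 = -e" by (simp add: e_def field_simps)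
    then show ?thesis by (simp add: powr_minus)
  qed
  ultimately show ?thesis
  proof -
    assume S: "sqrt (\<alpha>*Q)^(p+1) = C/\<delta> * Q powr e" and E: "Q powr (-(real p+1)/2) = inverse (Q powr e)"
    have X: "Q powr e > 0" using Q by simp
    show ?thesis unfolding S E using X C d by (simp add: field_simps)
  qed
qed

lemma good_pair:
  fixes h g :: "'a::euclidean_space \<Rightarrow> 'a"
  assumes h: "linear h" "inj h" and g: "linear g" "inj g" and p: "p \<ge> 1"
  shows "good (p+1) (\<lambda>\<theta>. 1 / (norm (h \<theta>)^p * norm (g \<theta>)))"
proof -
  obtain a1 b1 where ab1: "0 < a1" "a1 \<le> b1" "\<forall>\<theta>\<in>sphere 0 1. a1 \<le> norm (h \<theta>) \<and> norm (h \<theta>) \<le> b1"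
    using lin_bounds[OF h] by blast
  obtain a2 b2 where ab2: "0 < a2" "a2 \<le> b2" "\<forall>\<theta>\<in>sphere 0 1. a2 \<le> norm (g \<theta>) \<and> norm (g \<theta>) \<le> b2"
    using lin_bounds[OF g] by blast
  define m where "m = min a1 a2"
  define R where "R = max b1 b2"
  have m: "0 < m" "m \<le> R" using ab1 ab2 by (auto simp: m_def R_def)
  show ?thesis unfolding good_def
  proof (intro allI impI)
    fix \<epsilon> :: real assume e: "\<epsilon> > 0"
    obtain \<delta> C n where dC: "\<delta> > 0" "C > 0" and
      approx: "\<And>x y. m \<le> x \<Longrightarrow> x \<le> R \<Longrightarrow> m \<le> y \<Longrightarrow> y \<le> R \<Longrightarrow>
        \<bar>1/(x^p * y) - (\<Sum>k\<le>n. (\<delta>/C) * (x\<^sup>2 + (y * \<delta> * real k)\<^sup>2) powr (-(real p+1)/2))\<bar> \<le> \<epsilon>"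
      using scalar_approx[OF p m e] by blast
    define \<alpha> where "\<alpha> = (C/\<delta>) powr (2/(real p+1))"
    have apos: "\<alpha> > 0" using dC by (simp add: \<alpha>_def)
    have "\<forall>k. \<exists>h'::'a\<Rightarrow>'a. linear h' \<and> inj h' \<and> (\<forall>x. norm (h' x) = sqrt (\<alpha> * (norm (h x))\<^sup>2 + (\<alpha> * (\<delta> * real k)\<^sup>2) * (norm (g x))\<^sup>2))"
      using quad_comb[OF h g(1) apos] apos by simp
    then obtain H :: "nat \<Rightarrow> 'a \<Rightarrow> 'a" where H: "\<And>k. linear (H k)" "\<And>k. inj (H k)"
      "\<And>k x. norm (H k x) = sqrt (\<alpha> * (norm (h x))\<^sup>2 + (\<alpha> * (\<delta> * real k)\<^sup>2) * (norm (g x))\<^sup>2)"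
      by metis
    show "\<exists>m (H::nat \<Rightarrow> 'a \<Rightarrow> 'a). m \<ge> 1 \<and> (\<forall>j<m. linear (H j) \<and> inj (H j)) \<and>
      (\<forall>\<theta>\<in>sphere 0 1. \<bar>1 / (norm (h \<theta>)^p * norm (g \<theta>)) - (\<Sum>j<m. 1 / norm (H j \<theta>) ^ (p+1))\<bar> \<le> \<epsilon>)"
    proof (rule exI[of _ "Suc n"], rule exI[of _ H], intro conjI ballI allI impI)
      fix \<theta> :: 'a assume t: "\<theta> \<in> sphere 0 1"
      define x where "x = norm (h \<theta>)"
      define y where "y = norm (g \<theta>)"
      have xy: "m \<le> x" "x \<le> R" "m \<le> y" "y \<le> R" using ab1(3) ab2(3) t
        by (auto simp: x_def y_def m_def R_def min_le_iff_disj le_max_iff_disj)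
      have xpos: "x > 0" using xy m by simp
      have trm: "1 / norm (H k \<theta>) ^ (p+1) = (\<delta>/C) * (x\<^sup>2 + (y * \<delta> * real k)\<^sup>2) powr (-(real p+1)/2)" for k
      proof -
        have Qpos: "x\<^sup>2 + (y * \<delta> * real k)\<^sup>2 > 0" using xpos by (simp add: add_pos_nonneg)
        have "norm (H k \<theta>) = sqrt (\<alpha> * (x\<^sup>2 + (y * \<delta> * real k)\<^sup>2))"
          unfolding H x_def y_def by (simp add: algebra_simps power_mult_distrib)
        then show ?thesis using key_id[OF \<alpha>_def dC(2) dC(1) Qpos] by simp
      qed
      have "(\<Sum>j<Suc n. 1 / norm (H j \<theta>) ^ (p+1)) = (\<Sum>k\<le>n. (\<delta>/C) * (x\<^sup>2 + (y * \<delta> * real k)\<^sup>2) powr (-(real p+1)/2))"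
        unfolding lessThan_Suc_atMost trm by simp
      then show "\<bar>1 / (norm (h \<theta>)^p * norm (g \<theta>)) - (\<Sum>j<Suc n. 1 / norm (H j \<theta>) ^ (p+1))\<bar> \<le> \<epsilon>"
        using approx[OF xy] by (simp add: x_def y_def)
    qed (use H in auto)
  qed
qed

lemma good_single:
  fixes h :: "'a::euclidean_space \<Rightarrow> 'a"
  assumes "linear h" "inj h"
  shows "good p (\<lambda>\<theta>. 1 / norm (h \<theta>) ^ p)"
  unfolding good_def
proof (intro allI impI)
  fix \<epsilon> :: real assume "\<epsilon> > 0"
  then show "\<exists>m (H::nat \<Rightarrow> 'a \<Rightarrow> 'a). m \<ge> 1 \<and> (\<forall>j<m. linear (H j) \<and> inj (H j)) \<and>
      (\<forall>\<theta>\<in>sphere 0 1. \<bar>1 / norm (h \<theta>) ^ p - (\<Sum>j<m. 1 / norm (H j \<theta>) ^ p)\<bar> \<le> \<epsilon>)"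
    using assms by (intro exI[of _ 1] exI[of _ "\<lambda>_. h"]) auto
qed

lemma good_step:
  fixes F :: "'a::euclidean_space \<Rightarrow> real" and g :: "'a \<Rightarrow> 'a"
  assumes F: "good p F" and g: "linear g" "inj g" and p: "p \<ge> 1"
  shows "good (p+1) (\<lambda>\<theta>. F \<theta> / norm (g \<theta>))"
proof (rule good_approx)
  fix \<epsilon> :: real assume e: "\<epsilon> > 0"
  obtain a b where ab: "0 < a" "a \<le> b" "\<forall>\<theta>\<in>sphere 0 1. a \<le> norm (g \<theta>) \<and> norm (g \<theta>) \<le> b"
    using lin_bounds[OF g] by blast
  have ea: "\<epsilon> * a > 0" using e ab by simp
  obtain m and H :: "nat \<Rightarrow> 'a \<Rightarrow> 'a" where mH: "m \<ge> 1" "\<forall>j<m. linear (H j) \<and> inj (H j)"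
     "\<forall>\<theta>\<in>sphere 0 1. \<bar>F \<theta> - (\<Sum>j<m. 1 / norm (H j \<theta>) ^ p)\<bar> \<le> \<epsilon> * a"
    using F[unfolded good_def, rule_format, OF ea] by blast
  define G where "G \<theta> = (\<Sum>j<m. 1 / (norm (H j \<theta>)^p * norm (g \<theta>)))" for \<theta>
  have gG: "good (p+1) G"
  proof -
    have "0 \<in> {..<m}" using mH(1) by simp
    then have ne: "{..<m} \<noteq> {}" by blast
    show ?thesis unfolding G_def
    proof (rule good_sum[OF _ ne])
      fix j assume "j \<in> {..<m}"
      then have "linear (H j)" "inj (H j)" using mH(2) by auto
      from good_pair[OF this g p] show "good (p+1) (\<lambda>\<theta>. 1 / (norm (H j \<theta>)^p * norm (g \<theta>)))" .
    qed simp
  qed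
  show "\<exists>G. good (p+1) G \<and> (\<forall>\<theta>\<in>sphere 0 1. \<bar>F \<theta> / norm (g \<theta>) - G \<theta>\<bar> \<le> \<epsilon>)"
  proof (intro exI conjI ballI)
    show "good (p+1) G" by (rule gG)
    fix \<theta> :: 'a assume t: "\<theta> \<in> sphere 0 1"
    define N where "N = norm (g \<theta>)"
    have N: "a \<le> N" using ab t by (auto simp: N_def)
    have Npos: "N > 0" using N ab by simp
    define S where "S = (\<Sum>j<m. 1 / norm (H j \<theta>) ^ p)"
    have GS: "G \<theta> = S / N" unfolding G_def S_def N_def by (simp add: sum_divide_distrib)
    have "\<bar>F \<theta> / N - S / N\<bar> = \<bar>F \<theta> - S\<bar> / N" using Npos by (simp add: diff_divide_distrib[symmetric])
    also have "\<dots> \<le> (\<epsilon> * a) / N" using mH(3) t Npos unfolding S_def by (intro divide_right_mono) auto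
    also have "\<dots> \<le> (\<epsilon> * a) / a" using N ab ea by (intro divide_left_mono) auto
    also have "\<dots> = \<epsilon>" using ab by simp
    finally show "\<bar>F \<theta> / norm (g \<theta>) - G \<theta>\<bar> \<le> \<epsilon>" unfolding GS N_def .
  qed
qed


lemma good_prod:
  fixes G :: "nat \<Rightarrow> 'a::euclidean_space \<Rightarrow> 'a"
  assumes "p \<ge> 1" "\<forall>j<p. linear (G j) \<and> inj (G j)"
  shows "good p (\<lambda>\<theta>. \<Prod>j<p. 1 / norm (G j \<theta>))"
  using assms
proof (induction p)
  case 0 then show ?case by simp
next
  case (Suc p)
  have Gp: "linear (G p)" "inj (G p)" using Suc.prems(2) by blast+
  show ?case
  proof (cases "p = 0")
    case True
    have "good 1 (\<lambda>\<theta>. 1 / norm (G 0 \<theta>) ^ 1)" using Gp True by (intro good_single) auto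
    moreover have "(\<lambda>\<theta>. 1 / norm (G 0 \<theta>) ^ 1) = (\<lambda>\<theta>. \<Prod>j<Suc p. 1 / norm (G j \<theta>))"
      using True by (simp add: fun_eq_iff)
    ultimately show ?thesis using True by simp
  next
    case False
    have p1: "p \<ge> 1" using False by simp
    have pr: "\<forall>j<p. linear (G j) \<and> inj (G j)" using Suc.prems(2) by auto
    have IH: "good p (\<lambda>\<theta>. \<Prod>j<p. 1 / norm (G j \<theta>))" using p1 pr by (rule Suc.IH)
    have gs: "good (p+1) (\<lambda>\<theta>. (\<Prod>j<p. 1 / norm (G j \<theta>)) / norm (G p \<theta>))"
      by (rule good_step[OF IH Gp p1])
    have eq: "(\<lambda>\<theta>. (\<Prod>j<p. 1 / norm (G j \<theta>)) / norm (G p \<theta>)) = (\<lambda>\<theta>. \<Prod>j<Suc p. 1 / norm (G j \<theta>))"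
    proof
      fix \<theta>
      show "(\<Prod>j<p. 1 / norm (G j \<theta>)) / norm (G p \<theta>) = (\<Prod>j<Suc p. 1 / norm (G j \<theta>))"
        by (simp only: prod.lessThan_Suc) (simp add: divide_inverse)
    qed
    from gs[unfolded eq] show ?thesis by (simp only: Suc_eq_plus1)
  qed
qed

lemma lin_inv:
  fixes h :: "'a::euclidean_space \<Rightarrow> 'a"
  assumes "linear h" "inj h"
  shows "\<exists>g. linear g \<and> inj g \<and> (\<forall>x. g (h x) = x) \<and> (\<forall>y. h (g y) = y)"
proof -
  obtain g where g: "linear g" "g \<circ> h = id" using linear_injective_left_inverse[OF assms] by blast
  have gh: "g (h x) = x" for x using g(2) by (metis comp_apply id_apply)
  have surj: "surj h" using linear_inj_imp_surj[OF assms] .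
  have hg: "h (g y) = y" for y
  proof -
    obtain x where "y = h x" using surj by blast
    then show ?thesis using gh by simp
  qed
  have "inj g" by (metis hg injI)
  then show ?thesis using g(1) gh hg by blast
qed

lemma lin_nonzero:
  fixes h :: "'a::euclidean_space \<Rightarrow> 'a"
  assumes "linear h" "inj h" "x \<noteq> 0"
  shows "h x \<noteq> 0"
  using assms by (metis linear_0 injD)

lemma ell_radial:
  fixes f g :: "'a::euclidean_space \<Rightarrow> 'a"
  assumes f: "linear f" and g: "linear g" and gf: "\<And>x. g (f x) = x" and fg: "\<And>y. f (g y) = y"
    and t: "\<theta> \<noteq> 0"
  shows "radial (f ` cball 0 1) \<theta> = 1 / norm (g \<theta>)"
proof -
  have g0: "g \<theta> \<noteq> 0" using t fg f by (metis linear_0)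
  have "{r. r > 0 \<and> r *\<^sub>R \<theta> \<in> f ` cball 0 1} = {0<..1 / norm (g \<theta>)}"
  proof (intro set_eqI iffI)
    fix r assume "r \<in> {r. r > 0 \<and> r *\<^sub>R \<theta> \<in> f ` cball 0 1}"
    then obtain z where r: "r > 0" and z: "norm z \<le> 1" "r *\<^sub>R \<theta> = f z" by auto
    have "z = r *\<^sub>R g \<theta>" using z(2) gf g by (metis linear_scale)
    then have "r * norm (g \<theta>) \<le> 1" using z(1) r by simp
    then show "r \<in> {0<..1 / norm (g \<theta>)}" using r g0 by (simp add: field_simps)
  next
    fix r assume "r \<in> {0<..1 / norm (g \<theta>)}"
    then have r: "r > 0" "r * norm (g \<theta>) \<le> 1" using g0 by (auto simp: field_simps)
    have "f (r *\<^sub>R g \<theta>) = r *\<^sub>R \<theta>" using f fg by (simp add: linear_scale)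
    moreover have "r *\<^sub>R g \<theta> \<in> cball 0 1" using r by simp
    ultimately show "r \<in> {r. r > 0 \<and> r *\<^sub>R \<theta> \<in> f ` cball 0 1}" using r by (metis (mono_tags, lifting) image_eqI mem_Collect_eq)
  qed
  then show ?thesis unfolding radial_def using g0 by simp
qed

lemma ell_of:
  fixes h :: "'a::euclidean_space \<Rightarrow> 'a"
  assumes "linear h" "inj h"
  shows "\<exists>F. is_ellipsoid F \<and> (\<forall>\<theta>. \<theta> \<noteq> 0 \<longrightarrow> radial F \<theta> = 1 / norm (h \<theta>))"
proof -
  obtain g where g: "linear g" "inj g" "\<And>x. g (h x) = x" "\<And>y. h (g y) = y" using lin_inv[OF assms] by blast
  show ?thesis
  proof (intro exI conjI allI impI)
    show "is_ellipsoid (g ` cball 0 1)" unfolding is_ellipsoid_def using g by blast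
    fix \<theta> :: 'a assume "\<theta> \<noteq> 0"
    then show "radial (g ` cball 0 1) \<theta> = 1 / norm (h \<theta>)"
      by (rule ell_radial[OF g(1) assms(1) g(4) g(3)])
  qed
qed

lemma ell_radial_ex:
  fixes E :: "'a::euclidean_space set"
  assumes "is_ellipsoid E"
  shows "\<exists>g::'a\<Rightarrow>'a. linear g \<and> inj g \<and> (\<forall>\<theta>. \<theta> \<noteq> 0 \<longrightarrow> radial E \<theta> = 1 / norm (g \<theta>))"
proof -
  obtain f :: "'a \<Rightarrow> 'a" where f: "linear f" "inj f" "E = f ` cball 0 1" using assms unfolding is_ellipsoid_def by blast
  obtain g where g: "linear g" "inj g" "\<And>x. g (f x) = x" "\<And>y. f (g y) = y" using lin_inv[OF f(1,2)] by blast
  show ?thesis using g ell_radial[OF f(1) g(1) g(3) g(4)] f(3) by blast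
qed

lemma radial_body:
  fixes \<rho> :: "'a::euclidean_space \<Rightarrow> real"
  assumes "norm \<theta> = 1" "\<rho> \<theta> > 0"
  shows "radial (body_of_radial \<rho>) \<theta> = \<rho> \<theta>"
proof -
  have "{r. r > 0 \<and> r *\<^sub>R \<theta> \<in> body_of_radial \<rho>} = {0<..\<rho> \<theta>}"
  proof (intro set_eqI)
    fix r :: real
    show "r \<in> {r. r > 0 \<and> r *\<^sub>R \<theta> \<in> body_of_radial \<rho>} \<longleftrightarrow> r \<in> {0<..\<rho> \<theta>}"
    proof (cases "r > 0")
      case True
      have "(r *\<^sub>R \<theta>) /\<^sub>R norm (r *\<^sub>R \<theta>) = \<theta>" using True assms(1) by simp
      moreover have "r *\<^sub>R \<theta> \<noteq> 0" using True assms(1) by auto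
      ultimately show ?thesis using True assms(1) by (simp add: body_of_radial_def)
    qed auto
  qed
  then show ?thesis unfolding radial_def using assms by simp
qed

lemma star_body_of:
  fixes \<rho> :: "'a::euclidean_space \<Rightarrow> real"
  assumes cont: "continuous_on (-{0}) \<rho>" and pos: "\<And>x. x \<noteq> 0 \<Longrightarrow> \<rho> x > 0"
    and even: "\<And>x. \<rho> (-x) = \<rho> x"
  shows "star_body (body_of_radial \<rho>)" "\<And>\<theta>. \<theta> \<in> sphere 0 1 \<Longrightarrow> radial (body_of_radial \<rho>) \<theta> = \<rho> \<theta>"
proof -
  define B where "B = body_of_radial \<rho>"
  show rad: "radial (body_of_radial \<rho>) \<theta> = \<rho> \<theta>" if "\<theta> \<in> sphere 0 1" for \<theta>
  proof -
    have "\<theta> \<noteq> 0" using that by auto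
    then show ?thesis using that pos[of \<theta>] by (intro radial_body) auto
  qed
  have contS: "continuous_on (sphere 0 1) \<rho>" by (rule continuous_on_subset[OF cont]) auto
  have "compact (\<rho> ` sphere 0 1)" by (rule compact_continuous_image[OF contS compact_sphere])
  then have "bounded (\<rho> ` sphere 0 1)" by (rule compact_imp_bounded)
  then obtain M where M0: "\<forall>y\<in>\<rho> ` sphere 0 1. \<bar>y\<bar> \<le> M" unfolding bounded_real by blast
  have M: "\<rho> \<theta> \<le> M" if "\<theta> \<in> sphere 0 1" for \<theta>
  proof -
    have "\<bar>\<rho> \<theta>\<bar> \<le> M" using M0 that by blast
    then show ?thesis by (rule abs_le_D1)
  qed
  have bnd: "bounded B"
  proof -
    have "B \<subseteq> cball 0 (max M 0)"
    proof
      fix x assume "x \<in> B"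
      then have "x = 0 \<or> norm x \<le> \<rho> (x /\<^sub>R norm x)" by (simp add: B_def body_of_radial_def)
      moreover have "x \<noteq> 0 \<Longrightarrow> \<rho> (x /\<^sub>R norm x) \<le> M" by (intro M) simp
      ultimately show "x \<in> cball 0 (max M 0)" by (cases "x = 0") (auto simp: le_max_iff_disj)
    qed
    then show ?thesis using bounded_cball bounded_subset by blast
  qed
  have contN: "continuous_on (-{0}) (\<lambda>x::'a. x /\<^sub>R norm x)" by (intro continuous_intros) auto
  have contC: "continuous_on (-{0}) (\<lambda>x::'a. \<rho> (x /\<^sub>R norm x) - norm x)"
  proof (intro continuous_intros)
    show "continuous_on (-{0}) (\<lambda>x::'a. \<rho> (x /\<^sub>R norm x))"
      by (rule continuous_on_compose2[OF cont contN]) auto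
  qed
  have "open ((-{0}) \<inter> (\<lambda>x::'a. \<rho> (x /\<^sub>R norm x) - norm x) -` {..<0})"
    by (rule continuous_open_preimage[OF contC]) auto
  moreover have "(-{0}) \<inter> (\<lambda>x::'a. \<rho> (x /\<^sub>R norm x) - norm x) -` {..<0} = - B"
    by (auto simp: B_def body_of_radial_def)
  ultimately have "closed B" by (metis closed_open double_complement)
  then have cpt: "compact B" using bnd by (simp add: compact_eq_bounded_closed)
  have star: "\<forall>x\<in>B. \<forall>t\<in>{0..1}. t *\<^sub>R x \<in> B"
  proof (intro ballI)
    fix x t assume x: "x \<in> B" and t: "t \<in> {0..1::real}"
    show "t *\<^sub>R x \<in> B"
    proof (cases "t = 0 \<or> x = 0")
      case True then show ?thesis by (auto simp: B_def body_of_radial_def)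
    next
      case False
      then have tp: "t > 0" and xn: "x \<noteq> 0" using t by auto
      have xl: "norm x \<le> \<rho> (x /\<^sub>R norm x)" using x xn by (simp add: B_def body_of_radial_def)
      have eqn: "(t *\<^sub>R x) /\<^sub>R norm (t *\<^sub>R x) = x /\<^sub>R norm x" using tp by simp
      have le: "norm (t *\<^sub>R x) \<le> norm x" using t tp by (simp add: mult_left_le_one_le)
      have "norm (t *\<^sub>R x) \<le> \<rho> ((t *\<^sub>R x) /\<^sub>R norm (t *\<^sub>R x))" unfolding eqn using le xl by linarith
      then show ?thesis unfolding B_def body_of_radial_def by blast
    qed
  qed
  have sym: "\<forall>x\<in>B. - x \<in> B"
  proof
    fix x assume "x \<in> B"
    moreover have "\<rho> (- x /\<^sub>R norm x) = \<rho> (x /\<^sub>R norm x)" using even[of "x /\<^sub>R norm x"] by simp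
    ultimately show "- x \<in> B" by (auto simp: B_def body_of_radial_def)
  qed
  have rcont: "continuous_on (sphere 0 1) (radial B)"
    using contS by (rule continuous_on_eq) (simp add: rad B_def)
  have rpos: "\<forall>\<theta>\<in>sphere 0 1. radial B \<theta> > 0"
  proof
    fix \<theta> :: 'a assume th: "\<theta> \<in> sphere 0 1"
    then have "\<theta> \<noteq> 0" by auto
    then show "radial B \<theta> > 0" using rad[OF th] pos[of \<theta>] by (simp add: B_def)
  qed
  show "star_body (body_of_radial \<rho>)" unfolding star_body_def B_def[symmetric]
    using cpt star sym rcont rpos by blast
qed

lemma cont_term:
  fixes h :: "'a::euclidean_space \<Rightarrow> 'a"
  assumes "linear h" "inj h"
  shows "continuous_on (-{0}) (\<lambda>\<theta>. 1 / norm (h \<theta>) ^ l)"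
proof -
  have ch: "continuous_on (-{0}) h"
    using assms(1) by (intro linear_continuous_on) (simp add: linear_conv_bounded_linear)
  show ?thesis
    using assms lin_nonzero[OF assms] by (intro continuous_intros ch) auto
qed

lemma sum_terms_props:
  fixes H :: "nat \<Rightarrow> 'a::euclidean_space \<Rightarrow> 'a"
  assumes m: "m \<ge> 1" and H: "\<forall>j<m. linear (H j) \<and> inj (H j)"
  shows "continuous_on (-{0}) (\<lambda>\<theta>. \<Sum>j<m. 1 / norm (H j \<theta>) ^ l)"
    "\<And>x. x \<noteq> 0 \<Longrightarrow> (\<Sum>j<m. 1 / norm (H j x) ^ l) > 0"
    "\<And>x. (\<Sum>j<m. 1 / norm (H j (-x)) ^ l) = (\<Sum>j<m. 1 / norm (H j x) ^ l)"
proof -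
  show "continuous_on (-{0}) (\<lambda>\<theta>. \<Sum>j<m. 1 / norm (H j \<theta>) ^ l)"
    using H by (intro continuous_on_sum cont_term) auto
  show "(\<Sum>j<m. 1 / norm (H j x) ^ l) > 0" if "x \<noteq> 0" for x
  proof (rule sum_pos)
    have "0 \<in> {..<m}" using m by simp
    then show "{..<m} \<noteq> {}" by blast
    fix j assume "j \<in> {..<m}"
    then have "H j x \<noteq> 0" using H lin_nonzero that by blast
    then show "1 / norm (H j x) ^ l > 0" by simp
  qed simp
  show "(\<Sum>j<m. 1 / norm (H j (-x)) ^ l) = (\<Sum>j<m. 1 / norm (H j x) ^ l)" for x
    using H by (intro sum.cong) (auto simp: linear_neg)
qed

theorem mainTheorem2:
  fixes E :: "nat \<Rightarrow> 'a::euclidean_space set" and k l :: nat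
  assumes "1 \<le> k" and "k \<le> DIM('a) - 1"
    and "\<And>j. j < k \<Longrightarrow> is_ellipsoid (E j)"
    and "k \<le> l" and "l \<le> DIM('a) - 1"
  shows "\<exists>Ls :: nat \<Rightarrow> 'a set.
           (\<forall>i. star_body (Ls i))
         \<and> (\<lambda>i. radial_dist (Ls i) (body_of_radial (\<lambda>\<theta>. \<Prod>j<k. radial (E j) \<theta>))) \<longlonglongrightarrow> 0
         \<and> (\<forall>i. \<exists>m. \<exists>F :: nat \<Rightarrow> 'a set. (\<forall>j<m. is_ellipsoid (F j))
                 \<and> (\<forall>\<theta>\<in>sphere 0 1. radial (Ls i) \<theta> = (\<Sum>j<m. radial (F j) \<theta> ^ l)))"
proof -
  have "\<forall>j<k. \<exists>g::'a\<Rightarrow>'a. linear g \<and> inj g \<and> (\<forall>\<theta>. \<theta> \<noteq> 0 \<longrightarrow> radial (E j) \<theta> = 1 / norm (g \<theta>))"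
    using assms(3) ell_radial_ex by blast
  then obtain Gf :: "nat \<Rightarrow> 'a \<Rightarrow> 'a" where
    Gf: "\<forall>j<k. linear (Gf j) \<and> inj (Gf j) \<and> (\<forall>\<theta>. \<theta> \<noteq> 0 \<longrightarrow> radial (E j) \<theta> = 1 / norm (Gf j \<theta>))"
    by metis
  define G where "G j = (if j < k then Gf j else id)" for j
  have Glin: "\<forall>j<l. linear (G j) \<and> inj (G j)" using Gf by (auto simp: G_def linear_id)
  have l1: "l \<ge> 1" using assms(1,4) by simp
  have gd: "good l (\<lambda>\<theta>. \<Prod>j<l. 1 / norm (G j \<theta>))" by (rule good_prod[OF l1 Glin])
  define \<rho>L where "\<rho>L \<theta> = (\<Prod>j<k. radial (E j) \<theta>)" for \<theta>
  have eqL: "(\<Prod>j<l. 1 / norm (G j \<theta>)) = \<rho>L \<theta>" if th: "\<theta> \<in> sphere 0 1" for \<theta>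
  proof -
    have n1: "norm \<theta> = 1" and t0: "\<theta> \<noteq> 0" using th by auto
    have "(\<Prod>j<l. 1 / norm (G j \<theta>)) = (\<Prod>j<k. 1 / norm (G j \<theta>))"
      by (rule prod.mono_neutral_right) (use assms(4) n1 in \<open>auto simp: G_def\<close>)
    also have "\<dots> = \<rho>L \<theta>" unfolding \<rho>L_def
      by (rule prod.cong) (use Gf t0 in \<open>auto simp: G_def\<close>)
    finally show ?thesis .
  qed
  have \<rho>Lpos: "\<rho>L \<theta> > 0" if th: "\<theta> \<in> sphere 0 1" for \<theta>
  proof -
    have t0: "\<theta> \<noteq> 0" using th by auto
    have "(\<Prod>j<l. 1 / norm (G j \<theta>)) > 0"
    proof (rule prod_pos)
      fix j assume "j \<in> {..<l}"
      then have "G j \<theta> \<noteq> 0" using Glin lin_nonzero t0 by blast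
      then show "1 / norm (G j \<theta>) > 0" by simp
    qed
    then show ?thesis using eqL[OF th] by simp
  qed
  have "\<forall>i::nat. \<exists>m (H::nat\<Rightarrow>'a\<Rightarrow>'a). m \<ge> 1 \<and> (\<forall>j<m. linear (H j) \<and> inj (H j)) \<and>
        (\<forall>\<theta>\<in>sphere 0 1. \<bar>\<rho>L \<theta> - (\<Sum>j<m. 1 / norm (H j \<theta>) ^ l)\<bar> \<le> inverse (real (Suc i)))"
  proof
    fix i :: nat
    have "inverse (real (Suc i)) > 0" by simp
    from gd[unfolded good_def, rule_format, OF this]
    obtain m and H :: "nat\<Rightarrow>'a\<Rightarrow>'a" where mH: "m \<ge> 1" "\<forall>j<m. linear (H j) \<and> inj (H j)"
      "\<forall>\<theta>\<in>sphere 0 1. \<bar>(\<Prod>j<l. 1 / norm (G j \<theta>)) - (\<Sum>j<m. 1 / norm (H j \<theta>) ^ l)\<bar> \<le> inverse (real (Suc i))"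
      by blast
    show "\<exists>m (H::nat\<Rightarrow>'a\<Rightarrow>'a). m \<ge> 1 \<and> (\<forall>j<m. linear (H j) \<and> inj (H j)) \<and>
        (\<forall>\<theta>\<in>sphere 0 1. \<bar>\<rho>L \<theta> - (\<Sum>j<m. 1 / norm (H j \<theta>) ^ l)\<bar> \<le> inverse (real (Suc i)))"
      using mH eqL by (intro exI[of _ m] exI[of _ H]) auto
  qed
  then obtain M and HH :: "nat \<Rightarrow> nat \<Rightarrow> 'a \<Rightarrow> 'a" where
    MH: "\<And>i. M i \<ge> 1" "\<And>i. \<forall>j<M i. linear (HH i j) \<and> inj (HH i j)"
        "\<And>i. \<forall>\<theta>\<in>sphere 0 1. \<bar>\<rho>L \<theta> - (\<Sum>j<M i. 1 / norm (HH i j \<theta>) ^ l)\<bar> \<le> inverse (real (Suc i))"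
    by metis
  define \<rho> where "\<rho> i \<theta> = (\<Sum>j<M i. 1 / norm (HH i j \<theta>) ^ l)" for i \<theta>
  define Ls where "Ls i = body_of_radial (\<rho> i)" for i
  have props: "star_body (Ls i)" "\<And>\<theta>. \<theta> \<in> sphere 0 1 \<Longrightarrow> radial (Ls i) \<theta> = \<rho> i \<theta>" for i
  proof -
    note P = sum_terms_props[OF MH(1)[of i] MH(2)[of i], where l=l]
    have c: "continuous_on (-{0}) (\<rho> i)" using P(1) by (simp add: \<rho>_def[abs_def])
    have p: "\<And>x. x \<noteq> 0 \<Longrightarrow> \<rho> i x > 0" using P(2) by (simp add: \<rho>_def)
    have e: "\<And>x. \<rho> i (-x) = \<rho> i x" using P(3) by (simp add: \<rho>_def)
    show "star_body (Ls i)" unfolding Ls_def by (rule star_body_of(1)[OF c p e])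
    show "radial (Ls i) \<theta> = \<rho> i \<theta>" if "\<theta> \<in> sphere 0 1" for \<theta>
      unfolding Ls_def by (rule star_body_of(2)[OF c p e that])
  qed
  define L where "L = body_of_radial (\<lambda>\<theta>. \<Prod>j<k. radial (E j) \<theta>)"
  have rL: "radial L \<theta> = \<rho>L \<theta>" if th: "\<theta> \<in> sphere 0 1" for \<theta>
    unfolding L_def \<rho>L_def[symmetric] using th \<rho>Lpos[OF th] by (intro radial_body) (auto simp: \<rho>L_def[abs_def])
  have dist_le: "\<bar>radial_dist (Ls i) L\<bar> \<le> inverse (real (Suc i))" for i
  proof -
    have pt: "\<bar>radial (Ls i) \<theta> - radial L \<theta>\<bar> \<le> inverse (real (Suc i))" if th: "\<theta> \<in> sphere 0 1" for \<theta>
      using MH(3)[of i] th props(2)[OF th, of i] rL[OF th] by (auto simp: \<rho>_def abs_minus_commute)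
    have ne: "sphere (0::'a) 1 \<noteq> {}" by simp
    have up: "radial_dist (Ls i) L \<le> inverse (real (Suc i))"
      unfolding radial_dist_def by (rule cSUP_least[OF ne pt])
    obtain \<theta>0 :: 'a where th0: "\<theta>0 \<in> sphere 0 1" using ne by blast
    have bdd: "bdd_above ((\<lambda>\<theta>. \<bar>radial (Ls i) \<theta> - radial L \<theta>\<bar>) ` sphere 0 1)"
      using pt by (intro bdd_aboveI2) auto
    have "0 \<le> \<bar>radial (Ls i) \<theta>0 - radial L \<theta>0\<bar>" by simp
    also have "\<dots> \<le> radial_dist (Ls i) L" unfolding radial_dist_def by (rule cSUP_upper[OF th0 bdd])
    finally show ?thesis using up by simp
  qed
  show ?thesis
  proof (intro exI[of _ Ls] conjI allI)
    show "star_body (Ls i)" for i by (rule props(1))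
    show "(\<lambda>i. radial_dist (Ls i) (body_of_radial (\<lambda>\<theta>. \<Prod>j<k. radial (E j) \<theta>))) \<longlonglongrightarrow> 0"
      unfolding L_def[symmetric]
      by (rule Lim_null_comparison[OF _ LIMSEQ_inverse_real_of_nat]) (use dist_le in \<open>auto intro: always_eventually\<close>)
  next
    fix i
    have "\<forall>j<M i. \<exists>F::'a set. is_ellipsoid F \<and> (\<forall>\<theta>. \<theta> \<noteq> 0 \<longrightarrow> radial F \<theta> = 1 / norm (HH i j \<theta>))"
      using MH(2)[of i] ell_of by blast
    then obtain FF :: "nat \<Rightarrow> 'a set" where
      FF: "\<forall>j<M i. is_ellipsoid (FF j) \<and> (\<forall>\<theta>. \<theta> \<noteq> 0 \<longrightarrow> radial (FF j) \<theta> = 1 / norm (HH i j \<theta>))"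
      by metis
    show "\<exists>m. \<exists>F :: nat \<Rightarrow> 'a set. (\<forall>j<m. is_ellipsoid (F j))
                 \<and> (\<forall>\<theta>\<in>sphere 0 1. radial (Ls i) \<theta> = (\<Sum>j<m. radial (F j) \<theta> ^ l))"
    proof (intro exI[of _ "M i"] exI[of _ FF] conjI ballI allI impI)
      show "is_ellipsoid (FF j)" if "j < M i" for j using FF that by blast
      fix \<theta> :: 'a assume th: "\<theta> \<in> sphere 0 1"
      then have t0: "\<theta> \<noteq> 0" by auto
      show "radial (Ls i) \<theta> = (\<Sum>j<M i. radial (FF j) \<theta> ^ l)"
        unfolding props(2)[OF th] \<rho>_def
        by (rule sum.cong) (use FF t0 in \<open>auto simp: power_one_over\<close>)
    qed
  qed
qed

end
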